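(* In the setting and under the assumptions (P1), (A0)–(A3) of the mediational g-formula, with $A$ real-valued taking values $a,a^*$, suppose additionally: (H1) there are a locally integrable function $s\mapsto\rho_s$ and a function $\lambda_1$ such that for all $i\ge0$, all $t_i\le t\le t_{i+1}$, all $\overline m_i,\overline c_i$ and $j\in\{a,a^*\}$, $$P(T>t\mid T>t_i,\overline M_i=\overline m_i,\overline C_i=\overline c_i,A=j)=\exp\Big\{-\int_{t_i}^t\big(\rho_s j+\lambda_1(s\mid\overline m_i,\overline c_i)\big)\,ds\Big\};$$ (H2) the covariate factors do not depend on treatment: $P(C_i=c_i\mid T>t_i,\overline M_i=\overline m_i,\overline C_{i-1}=\overline c_{i-1},A=a)=P(C_i=c_i\mid T>t_i,\overline M_i=\overline m_i,\overline C_{i-1}=\overline c_{i-1},A=a^* )$ for all $i$ and all values. Then for all $t>0$, $$P_{a,a^*}(T>t)=\exp\Big\{-(a-a^* )\int_0^t\rho_s\,ds\Big\}\,P(T>t\mid A=a^* ).$$ Consequently, with $Q(t;j,j')=P_{j,j'}(T>t)$, the survival direct effect $SDE(t)=Q(t;a,a^* )/Q(t;a^*,a^* )$ equals $\exp\{(a^*-a)\int_0^t\rho_s ds\}$ and the survival indirect effect $SIE(t)=Q(t;a,a)/Q(t;a,a^* )$ equals $\exp\{(a-a^* )\int_0^t\rho_s ds\}\,P(T>t\mid A=a)/P(T>t\mid A=a^* )$.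
   Context: Setting: $0=t_0<t_1<\cdots$; random variables $A\in\{a,a^*\}$, finite-valued mediators $M_i$ and covariates $C_i$, survival time $T$ with $P(T>0)=1$; $\overline M_i=(M_0,\dots,M_i)$, $\overline C_i=(C_0,\dots,C_i)$. $P_{j,j'}$ is the interventional distribution under $do(A^D=j,A^M=j')$, $P_{do(A=j)}$ that under $do(A=j)$, $P$ the observational distribution. Assumptions: (P1) $P_{j,j}=P_{do(A=j)}$; (A0) $P_{do(A=j)}(E)=P(E\mid A=j)$ for events $E$ in $T,M_i,C_i$; (A1) $P_{a,a^*}(M_i=m_i\mid T>t_i,\overline M_{i-1},\overline C_{i-1})=P_{a^*,a^*}(M_i=m_i\mid T>t_i,\overline M_{i-1},\overline C_{i-1})$; (A2) for $t_i<s\le t_{i+1}$, $P_{a,a^*}(T>s\mid T>t_i,\overline M_i,\overline C_i)=P_{a,a}(T>s\mid T>t_i,\overline M_i,\overline C_i)$; (A3) $P_{a,a^*}(C_i=c_i\mid T>t_i,\overline M_i,\overline C_{i-1})=P_{a,a}(C_i=c_i\mid T>t_i,\overline M_i,\overline C_{i-1})$ (all for all values of the conditioning variables, index $-1$ meaning empty conditioning). All conditional probabilities are assumed well defined. *)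

theory Defs
  imports "HOL-Probability.Probability"
begin

definition cprob :: "'w measure \<Rightarrow> 'w set \<Rightarrow> 'w set \<Rightarrow> real" where
  "cprob Q E F = measure Q (E \<inter> F) / measure Q F"

text \<open>History of the first n values: hist X n w = (X 0 w, ..., X (n-1) w).
  Thus \<open>\<overline>M_i\<close> is hist M (Suc i) and \<open>\<overline>M_{i-1}\<close> is hist M i (empty for i = 0).\<close>
definition hist :: "(nat \<Rightarrow> 'w \<Rightarrow> 'v) \<Rightarrow> nat \<Rightarrow> 'w \<Rightarrow> 'v list" where
  "hist X n w = map (\<lambda>k. X k w) [0..<n]"

definition hist_in :: "(nat \<Rightarrow> 'v set) \<Rightarrow> nat \<Rightarrow> 'v list \<Rightarrow> bool" where
  "hist_in V n xs \<longleftrightarrow> length xs = n \<and> (\<forall>k<n. xs ! k \<in> V k)"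

definition histev :: "'w set \<Rightarrow> ('w \<Rightarrow> real) \<Rightarrow> (nat \<Rightarrow> 'w \<Rightarrow> 'm) \<Rightarrow> (nat \<Rightarrow> 'w \<Rightarrow> 'c)
    \<Rightarrow> real \<Rightarrow> nat \<Rightarrow> nat \<Rightarrow> 'm list \<Rightarrow> 'c list \<Rightarrow> 'w set" where
  "histev \<Omega> T M C t nm nc mb cb =
     {w \<in> \<Omega>. T w > t \<and> hist M nm w = mb \<and> hist C nc w = cb}"

text \<open>Events "in T, M_i, C_i": the sigma algebra generated by these variables.\<close>
definition obs_events :: "'w set \<Rightarrow> ('w \<Rightarrow> real) \<Rightarrow> (nat \<Rightarrow> 'w \<Rightarrow> 'm) \<Rightarrow> (nat \<Rightarrow> 'w \<Rightarrow> 'c)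
    \<Rightarrow> 'w set set" where
  "obs_events \<Omega> T M C = sigma_sets \<Omega>
     ({T -` B \<inter> \<Omega> | B. B \<in> sets borel} \<union> {M i -` {m} \<inter> \<Omega> | i m. True}
      \<union> {C i -` {c} \<inter> \<Omega> | i c. True})"

end

theory Submission
  imports Defs
begin

lemma ii_sub:
  fixes f :: "real \<Rightarrow> real"
  assumes "set_integrable lborel {x..y} f" "x \<le> u" "u \<le> v" "v \<le> y"
  shows "interval_lebesgue_integrable lborel (ereal u) (ereal v) f"
  using assms unfolding interval_lebesgue_integrable_def
  by (auto simp: einterval_eq intro!: set_integrable_subset[OF assms(1)])

lemma hist_Suc: "hist X (Suc n) w = hist X n w @ [X n w]"
  by (simp add: hist_def)

lemma hist_len[simp]: "length (hist X n w) = n"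
  by (simp add: hist_def)

lemma hist_sa:
  assumes sa: "sigma_algebra \<Omega> S" and b: "\<And>k x. {w\<in>\<Omega>. X k w = x} \<in> S"
  shows "{w\<in>\<Omega>. hist X n w = xs} \<in> S"
proof (induction n arbitrary: xs)
  case 0
  interpret sigma_algebra \<Omega> S by fact
  show ?case by (cases "xs = []") (auto simp: hist_def)
next
  case (Suc n)
  interpret sigma_algebra \<Omega> S by fact
  show ?case
  proof (cases "xs = []")
    case True
    then show ?thesis by (simp add: hist_Suc)
  next
    case False
    then obtain ys y where xs: "xs = ys @ [y]" by (metis rev_exhaust)
    have "{w\<in>\<Omega>. hist X (Suc n) w = xs} = {w\<in>\<Omega>. hist X n w = ys} \<inter> {w\<in>\<Omega>. X n w = y}"
      by (auto simp: hist_Suc xs)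
    then show ?thesis using Suc b by auto
  qed
qed

lemma histev_sa:
  assumes sa: "sigma_algebra \<Omega> S" and bM: "\<And>k x. {w\<in>\<Omega>. M k w = x} \<in> S"
    and bC: "\<And>k x. {w\<in>\<Omega>. C k w = x} \<in> S" and bT: "\<And>t. {w\<in>\<Omega>. T w > t} \<in> S"
  shows "histev \<Omega> T M C t nm nc mb cb \<in> S"
proof -
  interpret sigma_algebra \<Omega> S by fact
  have "histev \<Omega> T M C t nm nc mb cb = {w\<in>\<Omega>. T w > t} \<inter> {w\<in>\<Omega>. hist M nm w = mb} \<inter> {w\<in>\<Omega>. hist C nc w = cb}"
    by (auto simp: histev_def)
  then show ?thesis using hist_sa[of \<Omega> S M, OF sa bM] hist_sa[of \<Omega> S C, OF sa bC] bT by (simp add: Int)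
qed

lemma hist_in_snoc:
  assumes "hist_in V (Suc n) xs"
  obtains ys y where "xs = ys @ [y]" "hist_in V n ys"
proof -
  have "xs \<noteq> []" using assms by (auto simp: hist_in_def)
  then obtain ys y where xs: "xs = ys @ [y]" by (metis rev_exhaust)
  have "hist_in V n ys" using assms unfolding hist_in_def xs
    by (auto simp: nth_append) (metis less_SucI nth_append)
  then show ?thesis using that xs by blast
qed

lemma hist_in_snocI: "hist_in V n ys \<Longrightarrow> y \<in> V n \<Longrightarrow> hist_in V (Suc n) (ys @ [y])"
  by (auto simp: hist_in_def nth_append less_Suc_eq)

lemma finite_hist_in: "(\<And>k. finite (V k)) \<Longrightarrow> finite {xs. hist_in V n xs}"
proof -
  assume f: "\<And>k. finite (V k)"
  have "{xs. hist_in V n xs} \<subseteq> {xs. set xs \<subseteq> (\<Union>k<n. V k) \<and> length xs = n}"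
    by (auto simp: hist_in_def in_set_conv_nth) blast
  moreover have "finite {xs. set xs \<subseteq> (\<Union>k<n. V k) \<and> length xs = n}"
    using f by (intro finite_lists_length_eq) auto
  ultimately show ?thesis by (rule finite_subset)
qed

lemma cprob_mult:
  assumes "finite_measure Q" "E \<inter> F \<in> sets Q" "F \<in> sets Q"
  shows "measure Q (E \<inter> F) = cprob Q E F * measure Q F"
proof (cases "measure Q F = 0")
  case True
  interpret finite_measure Q by fact
  have "measure Q (E \<inter> F) \<le> measure Q F" using assms by (intro finite_measure_mono) auto
  moreover have "measure Q (E \<inter> F) \<ge> 0" by simp
  ultimately show ?thesis using True by (simp add: cprob_def)
qed (simp add: cprob_def)


theorem mainTheorem8:
  fixes P :: "'w measure"
    and Pint :: "real \<Rightarrow> real \<Rightarrow> 'w measure"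
    and Pdo :: "real \<Rightarrow> 'w measure"
    and A T :: "'w \<Rightarrow> real"
    and M :: "nat \<Rightarrow> 'w \<Rightarrow> 'm" and C :: "nat \<Rightarrow> 'w \<Rightarrow> 'c"
    and Mv :: "nat \<Rightarrow> 'm set" and Cv :: "nat \<Rightarrow> 'c set"
    and tg :: "nat \<Rightarrow> real"
    and a a' :: real
    and \<rho> :: "real \<Rightarrow> real" and lam1 :: "real \<Rightarrow> 'm list \<Rightarrow> 'c list \<Rightarrow> real"
  assumes probP: "prob_space P"
    and probInt: "\<And>j j'. prob_space (Pint j j')"
    and probDo: "\<And>j. prob_space (Pdo j)"
    and setsInt: "\<And>j j'. sets (Pint j j') = sets P"
    and setsDo: "\<And>j. sets (Pdo j) = sets P"
    and measA: "A \<in> borel_measurable P"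
    and measT: "T \<in> borel_measurable P"
    and measM: "\<And>i. M i \<in> measurable P (count_space UNIV)"
    and measC: "\<And>i. C i \<in> measurable P (count_space UNIV)"
    and A_vals: "\<And>w. w \<in> space P \<Longrightarrow> A w \<in> {a, a'}"
    and M_fin: "\<And>i. finite (Mv i)" and M_vals: "\<And>i w. w \<in> space P \<Longrightarrow> M i w \<in> Mv i"
    and C_fin: "\<And>i. finite (Cv i)" and C_vals: "\<And>i w. w \<in> space P \<Longrightarrow> C i w \<in> Cv i"
    and grid0: "tg 0 = 0" and grid_mono: "strict_mono tg"
    and grid_unbounded: "filterlim tg at_top sequentially"
    and T_pos: "measure P {w \<in> space P. T w > 0} = 1"
    and T_pos_int: "measure (Pint a a') {w \<in> space P. T w > 0} = 1"
    \<comment> \<open>all conditional probabilities are well defined\<close>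
    and pos_int: "\<And>Q i nm nc mb cb. Q \<in> {Pint a a', Pint a a, Pint a' a'} \<Longrightarrow>
        nm \<in> {i, Suc i} \<Longrightarrow> nc \<in> {i, Suc i} \<Longrightarrow> nc \<le> nm \<Longrightarrow>
        hist_in Mv nm mb \<Longrightarrow> hist_in Cv nc cb \<Longrightarrow>
        measure Q (histev (space P) T M C (tg i) nm nc mb cb) > 0"
    and pos_obs: "\<And>j i nm nc mb cb. j \<in> {a, a'} \<Longrightarrow>
        nm \<in> {i, Suc i} \<Longrightarrow> nc \<in> {i, Suc i} \<Longrightarrow> nc \<le> nm \<Longrightarrow>
        hist_in Mv nm mb \<Longrightarrow> hist_in Cv nc cb \<Longrightarrow>
        measure P (histev (space P) T M C (tg i) nm nc mb cb \<inter> {w \<in> space P. A w = j}) > 0"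
    \<comment> \<open>(P1)\<close>
    and P1: "\<And>j. j \<in> {a, a'} \<Longrightarrow> Pint j j = Pdo j"
    \<comment> \<open>(A0)\<close>
    and A0: "\<And>j E. j \<in> {a, a'} \<Longrightarrow> E \<in> obs_events (space P) T M C \<Longrightarrow>
        measure (Pdo j) E = cprob P E {w \<in> space P. A w = j}"
    \<comment> \<open>(A1)\<close>
    and A1: "\<And>i m mb cb. hist_in Mv i mb \<Longrightarrow> hist_in Cv i cb \<Longrightarrow>
        cprob (Pint a a') {w \<in> space P. M i w = m} (histev (space P) T M C (tg i) i i mb cb)
      = cprob (Pint a' a') {w \<in> space P. M i w = m} (histev (space P) T M C (tg i) i i mb cb)"
    \<comment> \<open>(A2)\<close>
    and A2: "\<And>i s mb cb. tg i < s \<Longrightarrow> s \<le> tg (Suc i) \<Longrightarrow>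
        hist_in Mv (Suc i) mb \<Longrightarrow> hist_in Cv (Suc i) cb \<Longrightarrow>
        cprob (Pint a a') {w \<in> space P. T w > s} (histev (space P) T M C (tg i) (Suc i) (Suc i) mb cb)
      = cprob (Pint a a) {w \<in> space P. T w > s} (histev (space P) T M C (tg i) (Suc i) (Suc i) mb cb)"
    \<comment> \<open>(A3)\<close>
    and A3: "\<And>i c mb cb. hist_in Mv (Suc i) mb \<Longrightarrow> hist_in Cv i cb \<Longrightarrow>
        cprob (Pint a a') {w \<in> space P. C i w = c} (histev (space P) T M C (tg i) (Suc i) i mb cb)
      = cprob (Pint a a) {w \<in> space P. C i w = c} (histev (space P) T M C (tg i) (Suc i) i mb cb)"
    \<comment> \<open>(H1)\<close>
    and rho_loc_int: "\<And>x y. set_integrable lborel {x..y} \<rho>"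
    and lam_int: "\<And>i mb cb. hist_in Mv (Suc i) mb \<Longrightarrow> hist_in Cv (Suc i) cb \<Longrightarrow>
        set_integrable lborel {tg i..tg (Suc i)} (\<lambda>s. lam1 s mb cb)"
    and H1: "\<And>i t j mb cb. tg i \<le> t \<Longrightarrow> t \<le> tg (Suc i) \<Longrightarrow> j \<in> {a, a'} \<Longrightarrow>
        hist_in Mv (Suc i) mb \<Longrightarrow> hist_in Cv (Suc i) cb \<Longrightarrow>
        cprob P {w \<in> space P. T w > t}
          (histev (space P) T M C (tg i) (Suc i) (Suc i) mb cb \<inter> {w \<in> space P. A w = j})
      = exp (- (LBINT s=tg i..t. \<rho> s * j + lam1 s mb cb))"
    \<comment> \<open>(H2)\<close>
    and H2: "\<And>i c mb cb. hist_in Mv (Suc i) mb \<Longrightarrow> hist_in Cv i cb \<Longrightarrow>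
        cprob P {w \<in> space P. C i w = c}
          (histev (space P) T M C (tg i) (Suc i) i mb cb \<inter> {w \<in> space P. A w = a})
      = cprob P {w \<in> space P. C i w = c}
          (histev (space P) T M C (tg i) (Suc i) i mb cb \<inter> {w \<in> space P. A w = a'})"
  shows "\<forall>t>0.
      measure (Pint a a') {w \<in> space P. T w > t}
        = exp (- (a - a') * (LBINT s=0..t. \<rho> s))
          * cprob P {w \<in> space P. T w > t} {w \<in> space P. A w = a'}
    \<and> measure (Pint a a') {w \<in> space P. T w > t} / measure (Pint a' a') {w \<in> space P. T w > t}
        = exp ((a' - a) * (LBINT s=0..t. \<rho> s))
    \<and> measure (Pint a a) {w \<in> space P. T w > t} / measure (Pint a a') {w \<in> space P. T w > t}
        = exp ((a - a') * (LBINT s=0..t. \<rho> s))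
          * cprob P {w \<in> space P. T w > t} {w \<in> space P. A w = a}
          / cprob P {w \<in> space P. T w > t} {w \<in> space P. A w = a'}"
proof -
  interpret P: prob_space P by fact
  define Q1 where "Q1 = Pint a a'"
  define Q2 where "Q2 = Pint a' a'"
  define Aj where "Aj j = {w\<in>space P. A w = j}" for j
  define R where "R t = (LBINT s=0..t. \<rho> s)" for t :: real
  define e where "e t = exp (- (a - a') * R t)" for t
  define Ev where "Ev t nm nc mb cb = histev (space P) T M C t nm nc mb cb" for t nm nc mb cb
  have spInt: "space (Pint j j') = space P" for j j' using setsInt sets_eq_imp_space_eq by metis
  have fmInt: "finite_measure (Pint j j')" for j j' using probInt prob_space_def by metis
  have mT: "{w\<in>space P. T w > t} \<in> sets P" for t
  proof -
    have "{w\<in>space P. T w > t} = T -` {t<..} \<inter> space P" by auto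
    then show ?thesis using measurable_sets[OF measT, of "{t<..}"] by auto
  qed
  have mM: "{w\<in>space P. M k w = x} \<in> sets P" for k x
  proof -
    have "{w\<in>space P. M k w = x} = M k -` {x} \<inter> space P" by auto
    then show ?thesis using measurable_sets[OF measM, of "{x}" k] by auto
  qed
  have mC: "{w\<in>space P. C k w = x} \<in> sets P" for k x
  proof -
    have "{w\<in>space P. C k w = x} = C k -` {x} \<inter> space P" by auto
    then show ?thesis using measurable_sets[OF measC, of "{x}" k] by auto
  qed
  have mA: "Aj j \<in> sets P" for j
  proof -
    have "Aj j = A -` {j} \<inter> space P" by (auto simp: Aj_def)
    then show ?thesis using measurable_sets[OF measA, of "{j}"] by auto
  qed
  have saP: "sigma_algebra (space P) (sets P)" by (rule sets.sigma_algebra_axioms)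
  have evP: "Ev t nm nc mb cb \<in> sets P" for t nm nc mb cb
    unfolding Ev_def by (rule histev_sa[OF saP mM mC mT])
  define Gen where "Gen = {T -` B \<inter> space P | B. B \<in> sets borel} \<union> {M i -` {m} \<inter> space P | i m. True}
      \<union> {C i -` {c} \<inter> space P | i c. True}"
  have obs_eq: "obs_events (space P) T M C = sigma_sets (space P) Gen"
    unfolding obs_events_def Gen_def ..
  have saO: "sigma_algebra (space P) (obs_events (space P) T M C)"
    unfolding obs_eq by (rule sigma_algebra_sigma_sets) (auto simp: Gen_def)
  have oT: "{w\<in>space P. T w > t} \<in> obs_events (space P) T M C" for t
  proof -
    have "{w\<in>space P. T w > t} = T -` {t<..} \<inter> space P" by auto
    then have "{w\<in>space P. T w > t} \<in> Gen" unfolding Gen_def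
      by (rule ssubst, intro UnI1 CollectI exI[of _ "{t<..}"]) simp
    then show ?thesis unfolding obs_eq by (rule sigma_sets.Basic)
  qed
  have oM: "{w\<in>space P. M k w = x} \<in> obs_events (space P) T M C" for k x
  proof -
    have "{w\<in>space P. M k w = x} = M k -` {x} \<inter> space P" by auto
    then have "{w\<in>space P. M k w = x} \<in> Gen" unfolding Gen_def
      by (rule ssubst, intro UnI1 UnI2 CollectI exI[of _ k] exI[of _ x]) simp
    then show ?thesis unfolding obs_eq by (rule sigma_sets.Basic)
  qed
  have oC: "{w\<in>space P. C k w = x} \<in> obs_events (space P) T M C" for k x
  proof -
    have "{w\<in>space P. C k w = x} = C k -` {x} \<inter> space P" by auto
    then have "{w\<in>space P. C k w = x} \<in> Gen" unfolding Gen_def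
      by (rule ssubst, intro UnI2 CollectI exI[of _ k] exI[of _ x]) simp
    then show ?thesis unfolding obs_eq by (rule sigma_sets.Basic)
  qed
  have evO: "Ev t nm nc mb cb \<in> obs_events (space P) T M C" for t nm nc mb cb
    unfolding Ev_def by (rule histev_sa[OF saO oM oC oT])
  have oInt: "E \<in> obs_events (space P) T M C \<Longrightarrow> F \<in> obs_events (space P) T M C \<Longrightarrow>
      E \<inter> F \<in> obs_events (space P) T M C" for E F
  proof -
    interpret O: sigma_algebra "space P" "obs_events (space P) T M C" by (rule saO)
    show "E \<in> obs_events (space P) T M C \<Longrightarrow> F \<in> obs_events (space P) T M C \<Longrightarrow>
      E \<inter> F \<in> obs_events (space P) T M C" by (rule O.Int)
  qed
  have pA: "measure P (Aj j) > 0" if "j \<in> {a, a'}" for j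
  proof -
    have "measure P (histev (space P) T M C (tg 0) 0 0 [] [] \<inter> {w \<in> space P. A w = j}) > 0"
      by (rule pos_obs[OF that]) (auto simp: hist_in_def)
    moreover have "measure P (histev (space P) T M C (tg 0) 0 0 [] [] \<inter> {w \<in> space P. A w = j})
        \<le> measure P (Aj j)"
      using mA by (intro P.finite_measure_mono) (auto simp: Aj_def)
    ultimately show ?thesis by linarith
  qed
  have CV: "cprob (Pint j j) E F = cprob P E (F \<inter> Aj j)"
    if j: "j \<in> {a, a'}" and E: "E \<in> obs_events (space P) T M C" and F: "F \<in> obs_events (space P) T M C"
    for j E F
  proof -
    have "measure (Pint j j) (E \<inter> F) = cprob P (E \<inter> F) (Aj j)"
      using A0[OF j oInt[OF E F]] P1[OF j] by (simp add: Aj_def)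
    moreover have "measure (Pint j j) F = cprob P F (Aj j)"
      using A0[OF j F] P1[OF j] by (simp add: Aj_def)
    ultimately show ?thesis using pA[OF j]
      by (simp add: cprob_def Int_assoc)
  qed
  have tg_nonneg: "tg i \<ge> 0" for i
    using strict_mono_less_eq[OF grid_mono, of 0 i] grid0 by simp
  have R_split: "R t = R (tg i) + (LBINT s=tg i..t. \<rho> s)" if "tg i \<le> t" for i t
  proof -
    have "interval_lebesgue_integrable lborel (min (ereal 0) (min (ereal (tg i)) (ereal t)))
        (max (ereal 0) (max (ereal (tg i)) (ereal t))) \<rho>"
      using that tg_nonneg[of i] ii_sub[OF rho_loc_int[of 0 t], of 0 t] by (simp add: min_def max_def)
    from interval_integral_sum[OF this] show ?thesis unfolding R_def zero_ereal_def by linarith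
  qed
  have int_lin: "(LBINT s=tg i..t. \<rho> s * a + lam1 s mb cb)
      = (a - a') * (LBINT s=tg i..t. \<rho> s) + (LBINT s=tg i..t. \<rho> s * a' + lam1 s mb cb)"
    if "tg i \<le> t" "t \<le> tg (Suc i)" "hist_in Mv (Suc i) mb" "hist_in Cv (Suc i) cb" for i t mb cb
  proof -
    have iR: "interval_lebesgue_integrable lborel (ereal (tg i)) (ereal t) \<rho>"
      using ii_sub[OF rho_loc_int[of "tg i" t], of "tg i" t] that by simp
    have iL: "interval_lebesgue_integrable lborel (ereal (tg i)) (ereal t) (\<lambda>s. lam1 s mb cb)"
      using ii_sub[OF lam_int[OF that(3,4)], of "tg i" t] that by simp
    have "(LBINT s=tg i..t. \<rho> s * j + lam1 s mb cb) = (LBINT s=tg i..t. \<rho> s) * j + (LBINT s=tg i..t. lam1 s mb cb)"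
      for j
      using interval_lebesgue_integral_add(2)[OF interval_lebesgue_integrable_mult_left[OF iR] iL] by simp
    then show ?thesis by (simp add: algebra_simps)
  qed
  have stage: "measure Q1 (Ev t (Suc i) (Suc i) mb' cb') = e t * measure Q2 (Ev t (Suc i) (Suc i) mb' cb')"
    if IH: "\<And>mb cb. hist_in Mv i mb \<Longrightarrow> hist_in Cv i cb \<Longrightarrow>
        measure Q1 (Ev (tg i) i i mb cb) = e (tg i) * measure Q2 (Ev (tg i) i i mb cb)"
    and t: "tg i < t" "t \<le> tg (Suc i)" and hm: "hist_in Mv (Suc i) mb'" and hc: "hist_in Cv (Suc i) cb'"
    for i t mb' cb'
  proof -
    obtain mb m where mb': "mb' = mb @ [m]" and hm0: "hist_in Mv i mb" using hist_in_snoc[OF hm] by blast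
    obtain cb c where cb': "cb' = cb @ [c]" and hc0: "hist_in Cv i cb" using hist_in_snoc[OF hc] by blast
    define G where "G = Ev (tg i) i i mb cb"
    define GM where "GM = Ev (tg i) (Suc i) i mb' cb"
    define GMC where "GMC = Ev (tg i) (Suc i) (Suc i) mb' cb'"
    define S where "S = Ev t (Suc i) (Suc i) mb' cb'"
    let ?EM = "{w\<in>space P. M i w = m}"
    let ?EC = "{w\<in>space P. C i w = c}"
    let ?ET = "{w\<in>space P. T w > t}"
    have GM_eq: "GM = ?EM \<inter> G"
      by (auto simp: GM_def G_def Ev_def histev_def hist_Suc mb')
    have GMC_eq: "GMC = ?EC \<inter> GM"
      by (auto simp: GMC_def GM_def Ev_def histev_def hist_Suc cb')
    have S_eq: "S = ?ET \<inter> GMC"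
      using t by (auto simp: GMC_def S_def Ev_def histev_def)
    have hm1: "hist_in Mv (Suc i) mb'" by fact
    have decomp: "measure Q S = cprob Q ?ET GMC * (cprob Q ?EC GM * (cprob Q ?EM G * measure Q G))"
      if "Q = Pint j j'" for Q j j'
    proof -
      have fm: "finite_measure Q" using fmInt that by simp
      have ss: "sets Q = sets P" using setsInt that by simp
      have sS: "S \<in> sets Q" and sGMC: "GMC \<in> sets Q" and sGM: "GM \<in> sets Q" and sG: "G \<in> sets Q"
        by (simp_all add: ss evP S_def GMC_def GM_def G_def)
      have "measure Q S = cprob Q ?ET GMC * measure Q GMC"
        unfolding S_eq by (rule cprob_mult[OF fm]) (use sS sGMC S_eq in simp_all)
      also have "measure Q GMC = cprob Q ?EC GM * measure Q GM"
        unfolding GMC_eq by (rule cprob_mult[OF fm]) (use sGMC sGM GMC_eq in simp_all)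
      also have "measure Q GM = cprob Q ?EM G * measure Q G"
        unfolding GM_eq by (rule cprob_mult[OF fm]) (use sGM sG GM_eq in simp_all)
      finally show ?thesis .
    qed
    have cM: "cprob Q1 ?EM G = cprob Q2 ?EM G"
      using A1[OF hm0 hc0, of m] unfolding Q1_def Q2_def G_def Ev_def .
    have cC: "cprob Q1 ?EC GM = cprob Q2 ?EC GM"
    proof -
      have "cprob Q1 ?EC GM = cprob (Pint a a) ?EC GM"
        using A3[OF hm1 hc0, of c] unfolding Q1_def GM_def Ev_def .
      also have "\<dots> = cprob P ?EC (GM \<inter> Aj a)"
        by (rule CV) (auto simp: oC GM_def evO)
      also have "\<dots> = cprob P ?EC (GM \<inter> Aj a')"
        using H2[OF hm1 hc0, of c] unfolding GM_def Ev_def Aj_def .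
      also have "\<dots> = cprob Q2 ?EC GM"
        unfolding Q2_def by (rule CV[symmetric]) (auto simp: oC GM_def evO)
      finally show ?thesis .
    qed
    have cT: "cprob Q1 ?ET GMC = exp (- (a - a') * (LBINT s=tg i..t. \<rho> s)) * cprob Q2 ?ET GMC"
    proof -
      have "cprob Q1 ?ET GMC = cprob (Pint a a) ?ET GMC"
        using A2[OF t hm hc] unfolding Q1_def GMC_def Ev_def .
      also have "\<dots> = cprob P ?ET (GMC \<inter> Aj a)"
        by (rule CV) (auto simp: oT GMC_def evO)
      also have "\<dots> = exp (- (LBINT s=tg i..t. \<rho> s * a + lam1 s mb' cb'))"
        using H1[of i t a mb' cb'] t hm hc unfolding GMC_def Ev_def Aj_def by simp
      also have "\<dots> = exp (- (a - a') * (LBINT s=tg i..t. \<rho> s)) * exp (- (LBINT s=tg i..t. \<rho> s * a' + lam1 s mb' cb'))"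
        using int_lin[of i t mb' cb'] t hm hc by (simp add: exp_add[symmetric] algebra_simps)
      also have "exp (- (LBINT s=tg i..t. \<rho> s * a' + lam1 s mb' cb')) = cprob P ?ET (GMC \<inter> Aj a')"
        using H1[of i t a' mb' cb'] t hm hc unfolding GMC_def Ev_def Aj_def by simp
      also have "\<dots> = cprob Q2 ?ET GMC"
        unfolding Q2_def by (rule CV[symmetric]) (auto simp: oT GMC_def evO)
      finally show ?thesis .
    qed
    have eq: "e t = exp (- (a - a') * (LBINT s=tg i..t. \<rho> s)) * e (tg i)"
      using R_split[of i t] t unfolding e_def by (simp add: exp_add[symmetric] algebra_simps)
    have "measure Q1 S = cprob Q1 ?ET GMC * (cprob Q1 ?EC GM * (cprob Q1 ?EM G * measure Q1 G))"
      by (rule decomp) (simp add: Q1_def)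
    also have "\<dots> = e t * (cprob Q2 ?ET GMC * (cprob Q2 ?EC GM * (cprob Q2 ?EM G * measure Q2 G)))"
      using IH[OF hm0 hc0] cM cC cT eq unfolding G_def by simp
    also have "\<dots> = e t * measure Q2 S"
      by (subst decomp[of Q2]) (auto simp: Q2_def)
    finally show ?thesis unfolding S_def .
  qed
  have obsQ: "measure (Pint j j) X = cprob P X (Aj j)"
    if "j \<in> {a, a'}" "X \<in> obs_events (space P) T M C" for j X
    using A0[OF that] P1[OF that(1)] by (simp add: Aj_def)
  have T0P: "measure P (Aj j \<inter> {w\<in>space P. T w > 0}) = measure P (Aj j)" for j
  proof -
    let ?T0 = "{w\<in>space P. T w > 0}"
    have c: "measure P (space P - ?T0) = 0" using P.prob_compl[OF mT[of 0]] T_pos by simp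
    have "measure P (Aj j) \<le> measure P ((Aj j \<inter> ?T0) \<union> (space P - ?T0))"
      using mA mT by (intro P.finite_measure_mono) (auto simp: Aj_def)
    also have "\<dots> \<le> measure P (Aj j \<inter> ?T0) + measure P (space P - ?T0)"
      using mA mT by (intro measure_subadditive) (auto simp: P.emeasure_finite)
    finally have "measure P (Aj j) \<le> measure P (Aj j \<inter> ?T0)" using c by simp
    moreover have "measure P (Aj j \<inter> ?T0) \<le> measure P (Aj j)"
      using mA by (intro P.finite_measure_mono) auto
    ultimately show ?thesis by linarith
  qed
  have IHall: "\<forall>mb cb. hist_in Mv i mb \<longrightarrow> hist_in Cv i cb \<longrightarrow>
      measure Q1 (Ev (tg i) i i mb cb) = e (tg i) * measure Q2 (Ev (tg i) i i mb cb)" for i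
  proof (induction i)
    case 0
    have ev0: "Ev (tg 0) 0 0 [] [] = {w\<in>space P. T w > 0}"
      by (auto simp: Ev_def histev_def hist_def grid0)
    have "measure Q2 {w\<in>space P. T w > 0} = cprob P {w\<in>space P. T w > 0} (Aj a')"
      unfolding Q2_def by (rule obsQ) (auto simp: oT)
    also have "\<dots> = 1" using T0P[of a'] pA[of a'] by (simp add: cprob_def Int_commute)
    finally have q2: "measure Q2 {w\<in>space P. T w > 0} = 1" .
    have "e (tg 0) = 1" by (simp add: e_def R_def grid0 zero_ereal_def)
    then show ?case using q2 T_pos_int ev0 by (auto simp: hist_in_def Q1_def)
  next
    case (Suc i)
    have lt: "tg i < tg (Suc i)" using grid_mono by (simp add: strict_monoD)
    show ?case
      using stage[of i "tg (Suc i)"] Suc lt by blast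
  qed
  show ?thesis
  proof (intro allI impI)
    fix t :: real assume "t > 0"
    have "eventually (\<lambda>n. t \<le> tg n) sequentially"
      using grid_unbounded by (simp add: filterlim_at_top)
    then obtain n where n: "t \<le> tg n" by (auto simp: eventually_sequentially)
    define n0 where "n0 = (LEAST n. t \<le> tg n)"
    have n0: "t \<le> tg n0" unfolding n0_def by (rule LeastI[of _ n]) (rule n)
    have "n0 \<noteq> 0" using n0 grid0 \<open>t > 0\<close> by (metis not_le)
    then obtain k where k: "n0 = Suc k" by (cases n0) auto
    have tk: "tg k < t"
    proof (rule ccontr)
      assume "\<not> tg k < t"
      then have "n0 \<le> k" unfolding n0_def by (intro Least_le) simp
      then show False using k by simp
    qed
    have tk1: "t \<le> tg (Suc k)" using n0 k by simp
    define I where "I = {mb. hist_in Mv (Suc k) mb} \<times> {cb. hist_in Cv (Suc k) cb}"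
    have finI: "finite I" unfolding I_def
      using finite_hist_in[of Mv, OF M_fin] finite_hist_in[of Cv, OF C_fin] by blast
    have hin: "hist_in V n (hist X n w)" if "\<And>i. X i w \<in> V i" for V n X w
      using that by (auto simp: hist_in_def hist_def)
    have Ueq: "{w\<in>space P. T w > t} = (\<Union>p\<in>I. Ev t (Suc k) (Suc k) (fst p) (snd p))"
    proof
      show "{w\<in>space P. T w > t} \<subseteq> (\<Union>p\<in>I. Ev t (Suc k) (Suc k) (fst p) (snd p))"
      proof
        fix w assume w: "w \<in> {w\<in>space P. T w > t}"
        then have "(hist M (Suc k) w, hist C (Suc k) w) \<in> I"
          unfolding I_def using hin[of M w Mv] hin[of C w Cv] M_vals C_vals by auto
        moreover have "w \<in> Ev t (Suc k) (Suc k) (hist M (Suc k) w) (hist C (Suc k) w)"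
          using w by (auto simp: Ev_def histev_def)
        ultimately show "w \<in> (\<Union>p\<in>I. Ev t (Suc k) (Suc k) (fst p) (snd p))" by force
      qed
    qed (auto simp: Ev_def histev_def)
    have sumQ: "measure (Pint j j') {w\<in>space P. T w > t}
        = (\<Sum>p\<in>I. measure (Pint j j') (Ev t (Suc k) (Suc k) (fst p) (snd p)))" for j j'
      unfolding Ueq
    proof (rule measure_finite_Union[OF finI])
      show "(\<lambda>p. Ev t (Suc k) (Suc k) (fst p) (snd p)) ` I \<subseteq> sets (Pint j j')"
        using evP setsInt by auto
      show "disjoint_family_on (\<lambda>p. Ev t (Suc k) (Suc k) (fst p) (snd p)) I"
        unfolding disjoint_family_on_def by (auto simp: Ev_def histev_def prod_eq_iff)
      show "emeasure (Pint j j') (Ev t (Suc k) (Suc k) (fst p) (snd p)) \<noteq> \<infinity>" for p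
        using finite_measure.emeasure_finite[OF fmInt] by simp
    qed
    have main: "measure Q1 {w\<in>space P. T w > t} = e t * measure Q2 {w\<in>space P. T w > t}"
    proof -
      have "measure Q1 {w\<in>space P. T w > t} = (\<Sum>p\<in>I. measure Q1 (Ev t (Suc k) (Suc k) (fst p) (snd p)))"
        unfolding Q1_def by (rule sumQ)
      also have "\<dots> = (\<Sum>p\<in>I. e t * measure Q2 (Ev t (Suc k) (Suc k) (fst p) (snd p)))"
      proof (rule sum.cong)
        fix p assume "p \<in> I"
        then show "measure Q1 (Ev t (Suc k) (Suc k) (fst p) (snd p)) = e t * measure Q2 (Ev t (Suc k) (Suc k) (fst p) (snd p))"
          using stage[of k t "fst p" "snd p"] IHall[of k] tk tk1 unfolding I_def by auto
      qed simp
      also have "\<dots> = e t * measure Q2 {w\<in>space P. T w > t}"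
        unfolding Q2_def by (simp add: sumQ sum_distrib_left)
      finally show ?thesis .
    qed
    have q2: "measure Q2 {w\<in>space P. T w > t} = cprob P {w\<in>space P. T w > t} (Aj a')"
      unfolding Q2_def by (rule obsQ) (auto simp: oT)
    have qa: "measure (Pint a a) {w\<in>space P. T w > t} = cprob P {w\<in>space P. T w > t} (Aj a)"
      by (rule obsQ) (auto simp: oT)
    obtain w0 where w0: "w0 \<in> space P" using P.not_empty by blast
    have "measure Q2 (Ev (tg (Suc k)) (Suc k) (Suc k) (hist M (Suc k) w0) (hist C (Suc k) w0)) > 0"
      unfolding Q2_def Ev_def
      by (rule pos_int) (use hin[of M w0 Mv] hin[of C w0 Cv] M_vals C_vals w0 in auto)
    moreover have "measure Q2 (Ev (tg (Suc k)) (Suc k) (Suc k) (hist M (Suc k) w0) (hist C (Suc k) w0))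
        \<le> measure Q2 {w\<in>space P. T w > t}"
      unfolding Q2_def using tk1 mT setsInt
      by (intro finite_measure.finite_measure_mono[OF fmInt]) (auto simp: Ev_def histev_def)
    ultimately have q2pos: "measure Q2 {w\<in>space P. T w > t} > 0" by linarith
    have epos: "e t > 0" by (simp add: e_def)
    have einv: "exp ((a - a') * R t) * e t = 1" unfolding e_def by (simp add: exp_add[symmetric] algebra_simps)
    show "measure (Pint a a') {w \<in> space P. T w > t}
        = exp (- (a - a') * (LBINT s=0..t. \<rho> s))
          * cprob P {w \<in> space P. T w > t} {w \<in> space P. A w = a'}
    \<and> measure (Pint a a') {w \<in> space P. T w > t} / measure (Pint a' a') {w \<in> space P. T w > t}
        = exp ((a' - a) * (LBINT s=0..t. \<rho> s))
    \<and> measure (Pint a a) {w \<in> space P. T w > t} / measure (Pint a a') {w \<in> space P. T w > t}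
        = exp ((a - a') * (LBINT s=0..t. \<rho> s))
          * cprob P {w \<in> space P. T w > t} {w \<in> space P. A w = a}
          / cprob P {w \<in> space P. T w > t} {w \<in> space P. A w = a'}"
    proof (intro conjI)
      show "measure (Pint a a') {w \<in> space P. T w > t}
        = exp (- (a - a') * (LBINT s=0..t. \<rho> s)) * cprob P {w \<in> space P. T w > t} {w \<in> space P. A w = a'}"
        using main q2 unfolding Q1_def e_def R_def Aj_def by simp
      show "measure (Pint a a') {w \<in> space P. T w > t} / measure (Pint a' a') {w \<in> space P. T w > t}
        = exp ((a' - a) * (LBINT s=0..t. \<rho> s))"
        using main q2pos unfolding Q1_def Q2_def e_def R_def by simp
      have "measure (Pint a a) {w \<in> space P. T w > t} / measure (Pint a a') {w \<in> space P. T w > t}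
          = (exp ((a - a') * R t) * e t) * cprob P {w \<in> space P. T w > t} (Aj a)
            / (e t * cprob P {w \<in> space P. T w > t} (Aj a'))"
        using main q2 qa einv unfolding Q1_def by simp
      also have "\<dots> = exp ((a - a') * R t) * cprob P {w \<in> space P. T w > t} (Aj a)
            / cprob P {w \<in> space P. T w > t} (Aj a')"
        using epos by (simp add: field_simps)
      finally show "measure (Pint a a) {w \<in> space P. T w > t} / measure (Pint a a') {w \<in> space P. T w > t}
        = exp ((a - a') * (LBINT s=0..t. \<rho> s)) * cprob P {w \<in> space P. T w > t} {w \<in> space P. A w = a}
          / cprob P {w \<in> space P. T w > t} {w \<in> space P. A w = a'}"
        unfolding R_def Aj_def .
    qed
  qed
qed

end
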